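(* Suppose each $\mathcal A_i$ is nonempty, convex and closed, and $\kappa(0,i,\cdot)$ is concave for all $i\in S$. Then there exists an equilibrium $u^*\in\mathcal A$.
   Context: Discrete-time setting: $S=\{1,\dots,N\}$, $\bar{\mathbb N}=\{0,1,2,\dots\}$, $\mathfrak P=\{\alpha\in\mathbb R_+^N:\sum_k\alpha_k=1\}$. $\kappa:\bar{\mathbb N}\times S\times\mathfrak P\to\mathbb R$ is continuous in $\alpha$ and satisfies $\sum_{t=0}^\infty\sup_{(i,\alpha)\in S\times\mathfrak P}|\kappa(t,i,\alpha)|<\infty$. For each $i$, $\mathcal A_i\subseteq\mathfrak P$ is given, and $\mathcal A=\{u\in\mathbb R^{N\times N}: u_i\in\mathcal A_i\ \forall i\}$ ($u_i$ the $i$-th row). $X$ is a time-homogeneous discrete-time Markov chain with transition matrix $u$; $\mathbb E_{i,u}$ the expectation given $X_0=i$. $V(i,u)=\mathbb E_{i,u}[\sum_{t=0}^\infty\kappa(t,X_t,u_{X_t})]$. $u\otimes_1u^*$: use $u$ at time $0$ and $u^*$ at all later times, so $V(i,u\otimes_1u^* )=\kappa(0,i,u_i)+\sum_j u_{ij}\mathbb E_{j,u^*}[\sum_{t=0}^\infty\kappa(t+1,X_t,u^*_{X_t})]$. $u^*\in\mathcal A$ is an equilibrium if $V(i,u^* )\ge V(i,u\otimes_1u^* )$ for all $(i,u)\in S\times\mathcal A$. *)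

theory Defs
  imports "HOL-Analysis.Analysis"
begin

text \<open>States S = {1..N} are modelled by an arbitrary finite type 'n; probability
  vectors are elements of real^'n, transition matrices are real^'n^'n (row i = u$i).\<close>

definition prob_simplex :: "(real^'n::finite) set" where
  "prob_simplex = {\<alpha>. (\<forall>k. 0 \<le> \<alpha>$k) \<and> (\<Sum>k\<in>UNIV. \<alpha>$k) = 1}"

definition admissible :: "('n::finite \<Rightarrow> (real^'n) set) \<Rightarrow> (real^'n^'n) set" where
  "admissible A = {u. \<forall>i. u$i \<in> A i}"

fun matpow :: "real^'n^'n \<Rightarrow> nat \<Rightarrow> real^'n^'n" where
  "matpow u 0 = mat 1"
| "matpow u (Suc t) = matpow u t ** u"

text \<open>V(i,u) = E_{i,u}[sum_t kappa(t,X_t,u_{X_t})]; since P(X_t = j | X_0 = i) = (u^t)_{ij},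
  this is sum_t sum_j (u^t)_{ij} kappa(t,j,u_j).\<close>
definition Vval :: "(nat \<Rightarrow> 'n::finite \<Rightarrow> real^'n \<Rightarrow> real) \<Rightarrow> 'n \<Rightarrow> real^'n^'n \<Rightarrow> real" where
  "Vval \<kappa> i u = (\<Sum>t. \<Sum>j\<in>UNIV. (matpow u t)$i$j * \<kappa> t j (u$j))"

definition Vdev :: "(nat \<Rightarrow> 'n::finite \<Rightarrow> real^'n \<Rightarrow> real) \<Rightarrow> 'n \<Rightarrow> real^'n^'n \<Rightarrow> real^'n^'n \<Rightarrow> real" where
  "Vdev \<kappa> i u us = \<kappa> 0 i (u$i) +
     (\<Sum>j\<in>UNIV. u$i$j * (\<Sum>t. \<Sum>k\<in>UNIV. (matpow us t)$j$k * \<kappa> (Suc t) k (us$k)))"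

definition equilibrium :: "(nat \<Rightarrow> 'n::finite \<Rightarrow> real^'n \<Rightarrow> real) \<Rightarrow> ('n \<Rightarrow> (real^'n) set) \<Rightarrow> real^'n^'n \<Rightarrow> bool" where
  "equilibrium \<kappa> A us \<longleftrightarrow> us \<in> admissible A \<and>
     (\<forall>i. \<forall>u\<in>admissible A. Vval \<kappa> i us \<ge> Vdev \<kappa> i u us)"

end

theory Submission
  imports Defs
begin

lemma ps_closed: "closed (prob_simplex :: (real^'n::finite) set)"
proof -
  have "prob_simplex = (\<Inter>k. {\<alpha>::real^'n. 0 \<le> \<alpha>$k}) \<inter> {\<alpha>. (\<Sum>k\<in>UNIV. \<alpha>$k) = 1}"
    by (auto simp: prob_simplex_def)
  moreover have "closed {\<alpha>::real^'n. (\<Sum>k\<in>UNIV. \<alpha>$k) = 1}"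
    by (intro closed_Collect_eq continuous_intros)
  moreover have "closed {\<alpha>::real^'n. 0 \<le> \<alpha>$k}" for k
    by (intro closed_Collect_le continuous_intros)
  hence "closed (\<Inter>k. {\<alpha>::real^'n. 0 \<le> \<alpha>$k})" by (intro closed_INT) auto
  ultimately show ?thesis by (metis closed_Int)
qed

lemma ps_comp_le1: "\<alpha> \<in> prob_simplex \<Longrightarrow> \<alpha>$k \<le> 1 \<and> 0 \<le> \<alpha>$k"
proof -
  assume a: "\<alpha> \<in> prob_simplex"
  hence "\<alpha>$k \<le> (\<Sum>k\<in>UNIV. \<alpha>$k)"
    by (intro member_le_sum) (auto simp: prob_simplex_def)
  with a show ?thesis by (auto simp: prob_simplex_def)
qed

lemma ps_bounded: "bounded (prob_simplex :: (real^'n::finite) set)"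
proof -
  have "norm \<alpha> \<le> (\<Sum>k\<in>UNIV. \<bar>\<alpha>$k\<bar>)" for \<alpha> :: "real^'n"
    by (metis norm_le_l1_cart real_norm_def sum.cong)
  moreover have "\<alpha> \<in> prob_simplex \<Longrightarrow> (\<Sum>k\<in>UNIV. \<bar>\<alpha>$k\<bar>) = 1" for \<alpha> :: "real^'n"
    by (auto simp: prob_simplex_def)
  ultimately show ?thesis unfolding bounded_iff by (metis order_refl)
qed

lemma ps_compact: "compact (prob_simplex :: (real^'n::finite) set)"
  using ps_closed ps_bounded compact_eq_bounded_closed by blast

lemma ps_convex: "convex (prob_simplex :: (real^'n::finite) set)"
  unfolding convex_def prob_simplex_def
  by (auto simp: sum.distrib sum_distrib_left[symmetric])

lemma matpow_Suc2: "matpow u (Suc t) = u ** matpow u t"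
proof (induction t)
  case 0 then show ?case by simp
next
  case (Suc t)
  have "matpow u (Suc (Suc t)) = (u ** matpow u t) ** u" using Suc by simp
  also have "\<dots> = u ** matpow u (Suc t)" by (simp add: matrix_mul_assoc)
  finally show ?case .
qed

lemma sum_ps: "p \<in> prob_simplex \<Longrightarrow> (\<And>k. g k \<in> prob_simplex) \<Longrightarrow>
   (\<chi> j. \<Sum>k\<in>UNIV. p$k * g k $ j) \<in> prob_simplex"
  unfolding prob_simplex_def
  by (auto simp: sum.swap[of _ UNIV UNIV] sum_distrib_left[symmetric] intro!: sum_nonneg)

lemma matpow_ps: "(\<And>i. u$i \<in> prob_simplex) \<Longrightarrow> matpow u t $ j \<in> prob_simplex"
proof (induction t arbitrary: j)
  case 0 then show ?case by (auto simp: prob_simplex_def mat_def)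
next
  case (Suc t)
  have "matpow u (Suc t) $ j = (\<chi> m. \<Sum>k\<in>UNIV. u$j$k * matpow u t $ k $ m)"
    by (simp add: matpow_Suc2 matrix_matrix_mult_def del: matpow.simps)
  then show ?case using Suc sum_ps by metis
qed

lemma cont_matpow: "continuous_on S (\<lambda>u. matpow u t $ j $ k)"
proof (induction t arbitrary: j k)
  case 0 then show ?case by simp
next
  case (Suc t)
  show ?case
    by (simp add: matrix_matrix_mult_def) (intro continuous_intros Suc)
qed

lemma stoch_bound: "p \<in> prob_simplex \<Longrightarrow> (\<And>k. \<bar>g k\<bar> \<le> B) \<Longrightarrow> \<bar>\<Sum>k\<in>UNIV. p$k * g k\<bar> \<le> B"
proof -
  assume p: "p \<in> prob_simplex" and g: "\<And>k. \<bar>g k\<bar> \<le> B"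
  have "\<bar>\<Sum>k\<in>UNIV. p$k * g k\<bar> \<le> (\<Sum>k\<in>UNIV. \<bar>p$k * g k\<bar>)" by (rule sum_abs)
  also have "\<dots> \<le> (\<Sum>k\<in>UNIV. p$k * B)"
    using p g by (intro sum_mono) (auto simp: prob_simplex_def abs_mult intro: mult_left_mono)
  also have "\<dots> = B" using p by (simp add: prob_simplex_def sum_distrib_right[symmetric])
  finally show ?thesis .
qed

lemma norm_comb_sq: "(norm ((1 - s) *\<^sub>R x + s *\<^sub>R y))\<^sup>2 =
   (1 - s) * (norm x)\<^sup>2 + s * (norm y)\<^sup>2 - s * (1 - s) * (norm (x - y))\<^sup>2"
  for x y :: "'a::real_inner"
  by (simp add: power2_norm_eq_inner inner_simps algebra_simps inner_commute)


definition Wf :: "(nat \<Rightarrow> 'n::finite \<Rightarrow> real^'n \<Rightarrow> real) \<Rightarrow> real^'n^'n \<Rightarrow> 'n \<Rightarrow> real" where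
  "Wf \<kappa> u j = (\<Sum>t. \<Sum>k\<in>UNIV. (matpow u t)$j$k * \<kappa> (Suc t) k (u$k))"

lemma kbound:
  fixes \<kappa> :: "nat \<Rightarrow> 'n::finite \<Rightarrow> real^'n \<Rightarrow> real"
  assumes cont: "\<And>t i. continuous_on prob_simplex (\<kappa> t i)" and a: "\<alpha> \<in> prob_simplex"
  shows "\<bar>\<kappa> t i \<alpha>\<bar> \<le> Sup {\<bar>\<kappa> t i \<alpha>\<bar> | i \<alpha>. \<alpha> \<in> prob_simplex}"
proof -
  have eq: "{\<bar>\<kappa> t i \<alpha>\<bar> | i \<alpha>. \<alpha> \<in> prob_simplex} = (\<Union>i\<in>UNIV. (\<lambda>\<alpha>. \<bar>\<kappa> t i \<alpha>\<bar>) ` prob_simplex)"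
    by auto
  have "compact (\<Union>i\<in>UNIV. (\<lambda>\<alpha>. \<bar>\<kappa> t i \<alpha>\<bar>) ` prob_simplex)"
    by (intro compact_UN finite compact_continuous_image ps_compact continuous_intros cont)
  hence "bdd_above {\<bar>\<kappa> t i \<alpha>\<bar> | i \<alpha>. \<alpha> \<in> prob_simplex}"
    unfolding eq by (intro bounded_imp_bdd_above compact_imp_bounded)
  thus ?thesis using a by (intro cSup_upper) auto
qed

lemma comp_cont: "continuous_on S (\<lambda>u::real^'n::finite^'m::finite. u$k)"
  by (intro continuous_intros)


theorem mainTheorem10:
  fixes \<kappa> :: "nat \<Rightarrow> 'n::finite \<Rightarrow> real^'n \<Rightarrow> real"
    and A :: "'n \<Rightarrow> (real^'n) set"
  assumes cont: "\<And>t i. continuous_on prob_simplex (\<kappa> t i)"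
    and summ: "summable (\<lambda>t. Sup {\<bar>\<kappa> t i \<alpha>\<bar> | i \<alpha>. \<alpha> \<in> prob_simplex})"
    and sub: "\<And>i. A i \<subseteq> prob_simplex"
    and ne: "\<And>i. A i \<noteq> {}"
    and cvx: "\<And>i. convex (A i)"
    and cl: "\<And>i. closed (A i)"
    and conc: "\<And>i. concave_on prob_simplex (\<kappa> 0 i)"
  shows "\<exists>us. equilibrium \<kappa> A us"
proof -
  define M where "M t = Sup {\<bar>\<kappa> t i \<alpha>\<bar> | i \<alpha>. \<alpha> \<in> prob_simplex}" for t
  have Mb: "\<alpha> \<in> prob_simplex \<Longrightarrow> \<bar>\<kappa> t i \<alpha>\<bar> \<le> M t" for t i \<alpha>
    unfolding M_def by (rule kbound[OF cont])
  have Msum: "summable M" using summ unfolding M_def .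
  have MsumS: "summable (\<lambda>t. M (Suc t))" using Msum summable_Suc_iff by blast
  define S where "S = admissible A"
  have Srow: "u \<in> S \<Longrightarrow> u$i \<in> A i" for u i by (simp add: S_def admissible_def)
  have Sps: "u \<in> S \<Longrightarrow> u$i \<in> prob_simplex" for u i using Srow sub by blast
  have Acomp: "compact (A i)" for i
    using sub[of i] cl[of i] ps_bounded bounded_subset compact_eq_bounded_closed by metis
  have Sclosed: "closed S"
  proof -
    have "S = (\<Inter>i. (\<lambda>u. u$i) -` A i)" by (auto simp: S_def admissible_def)
    moreover have "closed ((\<lambda>u::real^'n^'n. u$i) -` A i)" for i
      by (intro closed_vimage cl continuous_intros)
    ultimately show ?thesis by auto
  qed
  have Sbounded: "bounded S"
  proof -
    have "norm u \<le> real CARD('n)" if "u \<in> S" for u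
    proof -
      have "norm u \<le> (\<Sum>i\<in>UNIV. norm (u$i))"
        unfolding norm_vec_def by (rule L2_set_le_sum) auto
      also have "\<dots> \<le> (\<Sum>i\<in>(UNIV::'n set). 1)"
      proof (rule sum_mono)
        fix i
        have "norm (u$i) \<le> (\<Sum>k\<in>UNIV. \<bar>u$i$k\<bar>)" by (rule norm_le_l1_cart)
        also have "\<dots> = 1" using Sps[OF that, of i] by (simp add: prob_simplex_def)
        finally show "norm (u$i) \<le> 1" .
      qed
      finally show ?thesis by simp
    qed
    thus ?thesis unfolding bounded_iff by blast
  qed
  have Scomp: "compact S" using Sclosed Sbounded compact_eq_bounded_closed by blast
  have Sconv: "convex S"
    unfolding convex_def S_def admissible_def
    using cvx by (auto intro: convexD)
  have Sne: "S \<noteq> {}"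
  proof -
    have "(\<chi> i. SOME a. a \<in> A i) \<in> S"
      using ne by (auto simp: S_def admissible_def intro: some_in_eq[THEN iffD2])
    thus ?thesis by blast
  qed
  have termb: "\<bar>\<Sum>k\<in>UNIV. (matpow u t)$j$k * \<kappa> t' k (u$k)\<bar> \<le> M t'" if "u \<in> S" for u t j t'
    by (rule stoch_bound[OF matpow_ps[OF Sps[OF that]] Mb[OF Sps[OF that]]])
  have Wcont: "continuous_on S (\<lambda>u. Wf \<kappa> u j)" for j
  proof -
    have ul: "uniform_limit S (\<lambda>n u. \<Sum>t<n. \<Sum>k\<in>UNIV. (matpow u t)$j$k * \<kappa> (Suc t) k (u$k))
        (\<lambda>u. \<Sum>t. \<Sum>k\<in>UNIV. (matpow u t)$j$k * \<kappa> (Suc t) k (u$k)) sequentially"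
      by (rule Weierstrass_m_test[OF _ MsumS]) (simp add: termb)
    have kc: "continuous_on S (\<lambda>u. \<kappa> t k (u$k))" for t k
      by (rule continuous_on_compose2[OF cont comp_cont]) (auto simp: Sps)
    have "\<forall>\<^sub>F n in sequentially. continuous_on S (\<lambda>u. \<Sum>t<n. \<Sum>k\<in>UNIV. (matpow u t)$j$k * \<kappa> (Suc t) k (u$k))"
      by (intro always_eventually allI continuous_intros cont_matpow kc)
    from uniform_limit_theorem[OF this ul] show ?thesis unfolding Wf_def by simp
  qed
  define H where "H u i \<alpha> = \<kappa> 0 i \<alpha> + (\<Sum>j\<in>UNIV. \<alpha>$j * Wf \<kappa> u j) - (norm (\<alpha> - u$i))\<^sup>2" for u i \<alpha>
  have Hcomb: "H u i ((1 - s) *\<^sub>R a + s *\<^sub>R b) \<ge> (1 - s) * H u i a + s * H u i b + s * (1 - s) * (norm (a - b))\<^sup>2"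
    if "a \<in> A i" "b \<in> A i" "0 \<le> s" "s \<le> 1" for u i a b s
  proof -
    have k: "\<kappa> 0 i ((1 - s) *\<^sub>R a + s *\<^sub>R b) \<ge> (1 - s) * \<kappa> 0 i a + s * \<kappa> 0 i b"
      using that sub by (intro concave_onD[OF conc]) auto
    have l: "(\<Sum>j\<in>UNIV. ((1 - s) *\<^sub>R a + s *\<^sub>R b)$j * Wf \<kappa> u j) =
        (1 - s) * (\<Sum>j\<in>UNIV. a$j * Wf \<kappa> u j) + s * (\<Sum>j\<in>UNIV. b$j * Wf \<kappa> u j)"
      by (simp add: sum.distrib sum_distrib_left sum_subtractf algebra_simps)
    have "(1 - s) *\<^sub>R a + s *\<^sub>R b - u$i = (1 - s) *\<^sub>R (a - u$i) + s *\<^sub>R (b - u$i)"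
      by (simp add: algebra_simps)
    hence n: "(norm ((1 - s) *\<^sub>R a + s *\<^sub>R b - u$i))\<^sup>2 = (1 - s) * (norm (a - u$i))\<^sup>2
         + s * (norm (b - u$i))\<^sup>2 - s * (1 - s) * (norm (a - b))\<^sup>2"
      by (simp add: norm_comb_sq)
    show ?thesis unfolding H_def l n using k by (simp add: algebra_simps)
  qed
  have Hcont: "continuous_on (A i) (H u i)" if "u \<in> S" for u i
    unfolding H_def
    by (intro continuous_intros continuous_on_subset[OF cont sub])
  have ex1: "\<exists>!a. a \<in> A i \<and> (\<forall>\<beta>\<in>A i. H u i \<beta> \<le> H u i a)" if uS0: "u \<in> S" for u i
  proof -
    obtain a where a: "a \<in> A i" "\<forall>\<beta>\<in>A i. H u i \<beta> \<le> H u i a"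
      using continuous_attains_sup[OF Acomp ne Hcont[OF uS0]] by blast
    have "b = a" if b: "b \<in> A i" "\<forall>\<beta>\<in>A i. H u i \<beta> \<le> H u i b" for b
    proof (rule ccontr)
      assume "b \<noteq> a"
      hence pos: "(norm (a - b))\<^sup>2 > 0" by simp
      have m: "(1 - 1/2) *\<^sub>R a + (1/2) *\<^sub>R b \<in> A i"
        using a(1) b(1) cvx[of i] by (intro convexD) auto
      have "H u i ((1 - 1/2) *\<^sub>R a + (1/2) *\<^sub>R b) \<ge> (1 - 1/2) * H u i a + 1/2 * H u i b + 1/2 * (1 - 1/2) * (norm (a - b))\<^sup>2"
        using a(1) b(1) by (intro Hcomb) auto
      moreover have "H u i a = H u i b" using a b by (meson order_antisym)
      moreover have "H u i ((1 - 1/2) *\<^sub>R a + (1/2) *\<^sub>R b) \<le> H u i a" using a(2) m by blast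
      ultimately show False using pos by simp
    qed
    thus ?thesis using a by blast
  qed
  define T where "T u = (\<chi> i. THE a. a \<in> A i \<and> (\<forall>\<beta>\<in>A i. H u i \<beta> \<le> H u i a))" for u
  have Tprop: "T u $ i \<in> A i \<and> (\<forall>\<beta>\<in>A i. H u i \<beta> \<le> H u i (T u $ i))" if "u \<in> S" for u i
    unfolding T_def using theI'[OF ex1[OF that, of i]] by simp
  have TS: "T u \<in> S" if "u \<in> S" for u
    using Tprop[OF that] by (simp add: S_def admissible_def)
  have Hc2: "continuous_on (S \<times> S) (\<lambda>p. H (fst p) i (snd p $ i) - H (fst p) i \<beta>)" if "\<beta> \<in> A i" for i \<beta>
  proof -
    have k: "continuous_on (S \<times> S) (\<lambda>p. \<kappa> 0 i (snd p $ i))"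
      by (rule continuous_on_compose2[OF cont[of 0 i]]) (auto intro!: continuous_intros simp: Sps)
    have w: "continuous_on (S \<times> S) (\<lambda>p. Wf \<kappa> (fst p) j)" for j
      by (rule continuous_on_compose2[OF Wcont continuous_on_fst]) auto
    show ?thesis unfolding H_def
      by (intro continuous_intros k w)
  qed
  define G where "G = (S \<times> S) \<inter> (\<Inter>i. \<Inter>\<beta>\<in>A i. (S \<times> S) \<inter> (\<lambda>p. H (fst p) i (snd p $ i) - H (fst p) i \<beta>) -` {0..})"
  have Gclosed: "closed G"
    unfolding G_def
    by (intro closed_Int closed_Times Sclosed closed_INT ballI continuous_closed_preimage Hc2) auto
  have graph: "(\<lambda>u. (u, T u)) ` S = G"
  proof
    show "(\<lambda>u. (u, T u)) ` S \<subseteq> G"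
      using Tprop TS by (auto simp: G_def)
  next
    show "G \<subseteq> (\<lambda>u. (u, T u)) ` S"
    proof
      fix p assume p: "p \<in> G"
      obtain u a where pu: "p = (u, a)" by (cases p)
      have uS: "u \<in> S" and aS: "a \<in> S" using p pu by (auto simp: G_def)
      have "a$i = T u $ i" for i
      proof -
        have "(u,a) \<in> (\<lambda>p. H (fst p) i (snd p $ i) - H (fst p) i \<beta>) -` {0..}" if "\<beta> \<in> A i" for \<beta>
          using p pu that unfolding G_def by blast
        hence "a$i \<in> A i \<and> (\<forall>\<beta>\<in>A i. H u i \<beta> \<le> H u i (a$i))"
          using Srow[OF aS] by auto
        thus ?thesis using ex1[OF uS, of i] Tprop[OF uS, of i] by blast
      qed
      hence "a = T u" by (simp add: vec_eq_iff)
      thus "p \<in> (\<lambda>u. (u, T u)) ` S" using pu uS by blast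
    qed
  qed
  have Tcont: "continuous_on S T"
    by (rule continuous_from_closed_graph[OF Scomp]) (use TS graph Gclosed in auto)
  obtain us where usS: "us \<in> S" and usfix: "T us = us"
    using brouwer[OF Scomp Sconv Sne Tcont] TS by blast
  define f where "f i \<alpha> = \<kappa> 0 i \<alpha> + (\<Sum>j\<in>UNIV. \<alpha>$j * Wf \<kappa> us j)" for i \<alpha>
  have best: "f i \<beta> \<le> f i (us$i)" if "\<beta> \<in> A i" for i \<beta>
  proof (rule ccontr)
    assume nb: "\<not> f i \<beta> \<le> f i (us$i)"
    define a where "a = us$i"
    define \<delta> where "\<delta> = f i \<beta> - f i a"
    define D where "D = (norm (a - \<beta>))\<^sup>2"
    have \<delta>: "\<delta> > 0" using nb by (simp add: \<delta>_def a_def)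
    have aA: "a \<in> A i" and amax: "\<forall>\<beta>\<in>A i. H us i \<beta> \<le> H us i a"
      using Tprop[OF usS, of i] usfix by (auto simp: a_def)
    have "a \<noteq> \<beta>" using \<delta> by (auto simp: \<delta>_def)
    hence D: "D > 0" by (simp add: D_def)
    define s where "s = min 1 (\<delta> / (2 * D))"
    have s0: "s > 0" using \<delta> D by (simp add: s_def)
    have s1: "s \<le> 1" by (simp add: s_def)
    have sD: "s * D \<le> \<delta> / 2" using D by (simp add: s_def min_def field_simps)
    have Ha: "H us i a = f i a" by (simp add: H_def f_def a_def)
    have Hb: "H us i \<beta> = f i \<beta> - D" by (simp add: H_def f_def a_def D_def norm_minus_commute)
    have "H us i ((1 - s) *\<^sub>R a + s *\<^sub>R \<beta>) \<ge> (1 - s) * H us i a + s * H us i \<beta> + s * (1 - s) * D"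
      unfolding D_def using aA that s0 s1 by (intro Hcomb) auto
    moreover have "(1 - s) *\<^sub>R a + s *\<^sub>R \<beta> \<in> A i"
      using aA that s0 s1 cvx[of i] by (intro convexD) auto
    hence "H us i ((1 - s) *\<^sub>R a + s *\<^sub>R \<beta>) \<le> H us i a" using amax by blast
    moreover have "s * (s * D) \<le> s * (\<delta> / 2)" using sD s0 by (intro mult_left_mono) auto
    moreover have "(1 - s) * f i a + s * (f i \<beta> - D) + s * (1 - s) * D = f i a + s * \<delta> - s * (s * D)"
      by (simp add: \<delta>_def algebra_simps)
    moreover have "s * \<delta> > 0" using s0 \<delta> by simp
    ultimately show False unfolding Ha Hb by linarith
  qed
  have Vval_eq: "Vval \<kappa> i us = f i (us$i)" for i
  proof -
    define g where "g t = (\<Sum>j\<in>UNIV. (matpow us t)$i$j * \<kappa> t j (us$j))" for t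
    define h where "h m t = (\<Sum>k\<in>UNIV. (matpow us t)$m$k * \<kappa> (Suc t) k (us$k))" for m t
    have gs: "summable g"
      by (rule summable_comparison_test'[OF Msum]) (simp add: g_def termb[OF usS])
    have hs: "summable (h m)" for m
      by (rule summable_comparison_test'[OF MsumS]) (simp add: h_def termb[OF usS])
    have g0: "g 0 = \<kappa> 0 i (us$i)"
      by (simp add: g_def mat_def if_distrib[where f="\<lambda>x. x * c" for c] cong: if_cong)
    have gS: "g (Suc t) = (\<Sum>m\<in>UNIV. us$i$m * h m t)" for t
      by (simp add: g_def h_def matpow_Suc2 matrix_matrix_mult_def sum_distrib_left sum_distrib_right
          mult.assoc del: matpow.simps) (rule sum.swap)
    have "Vval \<kappa> i us = suminf g" by (simp add: Vval_def g_def[abs_def])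
    also have "\<dots> = g 0 + (\<Sum>t. g (Suc t))" using suminf_split_head[OF gs] by simp
    also have "(\<Sum>t. g (Suc t)) = (\<Sum>m\<in>UNIV. \<Sum>t. us$i$m * h m t)"
      unfolding gS by (rule suminf_sum) (intro summable_mult hs)
    also have "\<dots> = (\<Sum>m\<in>UNIV. us$i$m * Wf \<kappa> us m)"
      by (intro sum.cong refl) (simp only: suminf_mult[OF hs], simp add: h_def[abs_def] Wf_def)
    finally show ?thesis by (simp add: f_def g0)
  qed
  have "equilibrium \<kappa> A us"
    unfolding equilibrium_def
  proof (intro conjI allI ballI)
    show "us \<in> admissible A" using usS by (simp add: S_def)
  next
    fix i u assume u: "u \<in> admissible A"
    have "Vdev \<kappa> i u us = f i (u$i)" by (simp add: Vdev_def f_def Wf_def)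
    also have "\<dots> \<le> f i (us$i)" using u by (intro best) (simp add: admissible_def)
    finally show "Vdev \<kappa> i u us \<le> Vval \<kappa> i us" using Vval_eq by simp
  qed
  thus ?thesis by blast
qed

end
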